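(* Let $I\subset\mathbb{R}$ be an open interval, let $\bm{a}:I\to\mathbb{R}^2_1$ be a timelike frontal with Gauss mapping $\bm{\nu}:I\to S^1_1$, and let $r:I\to\mathbb{R}^+$ be a positive constant function. If $\bm{a}$ is not constant (i.e. its image is not a single point), then the pseudo-circle family $C_{(\bm{a}(t),-r(t))}$ does not create an envelope.
   Context: All objects are $C^\infty$. The Minkowski plane $\mathbb{R}^2_1$ is $\mathbb{R}^2$ with $\langle\bm{x},\bm{y}\rangle=-x_1y_1+x_2y_2$; $S^1_1=\{\bm{x}:\langle\bm{x},\bm{x}\rangle=1\}$. A smooth $\bm{a}:I\to\mathbb{R}^2_1$ is a timelike frontal if there is a smooth $\bm{\nu}:I\to S^1_1$ (Gauss mapping) with $\langle\frac{d\bm{a}}{dt}(t),\bm{\nu}(t)\rangle=0$ for all $t$. $C_{(\bm{a}(t),-r(t))}=\{\bm{x}\in\mathbb{R}^2_1:\langle\bm{x}-\bm{a}(t),\bm{x}-\bm{a}(t)\rangle=-r(t)^2\}$. An envelope of $C_{(\bm{a}(t),-r(t))}$ is a smooth $f:I\to\mathbb{R}^2_1$ with $f(t)\in C_{(\bm{a}(t),-r(t))}$ and $\langle\frac{df}{dt}(t),f(t)-\bm{a}(t)\rangle=0$ for all $t\in I$. *)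

theory Defs
  imports "HOL-Analysis.Analysis"
begin

text \<open>Minkowski plane R^2_1 modelled as real \<times> real, with x = (x1, x2) and
  pseudo-scalar product -x1 y1 + x2 y2.\<close>
definition mink :: "real \<times> real \<Rightarrow> real \<times> real \<Rightarrow> real" where
  "mink x y = - fst x * fst y + snd x * snd y"

definition deSitter1 :: "(real \<times> real) set" where
  "deSitter1 = {x. mink x x = 1}"

definition smooth_on :: "real set \<Rightarrow> (real \<Rightarrow> 'a::real_normed_vector) \<Rightarrow> bool" where
  "smooth_on I f \<longleftrightarrow> (\<exists>D :: nat \<Rightarrow> real \<Rightarrow> 'a. D 0 = f \<and>
      (\<forall>k. \<forall>t\<in>I. (D k has_vector_derivative D (Suc k) t) (at t)))"

definition timelike_frontal :: "real set \<Rightarrow> (real \<Rightarrow> real \<times> real) \<Rightarrow> (real \<Rightarrow> real \<times> real) \<Rightarrow> bool" where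
  "timelike_frontal I a \<nu> \<longleftrightarrow> smooth_on I a \<and> smooth_on I \<nu> \<and>
      (\<forall>t\<in>I. \<nu> t \<in> deSitter1) \<and>
      (\<forall>t\<in>I. mink (vector_derivative a (at t)) (\<nu> t) = 0)"

definition pseudo_circle :: "real \<times> real \<Rightarrow> real \<Rightarrow> (real \<times> real) set" where
  "pseudo_circle c r = {x. mink (x - c) (x - c) = - (r^2)}"

definition is_envelope :: "real set \<Rightarrow> (real \<Rightarrow> real \<times> real) \<Rightarrow> (real \<Rightarrow> real) \<Rightarrow> (real \<Rightarrow> real \<times> real) \<Rightarrow> bool" where
  "is_envelope I a r f \<longleftrightarrow> smooth_on I f \<and>
      (\<forall>t\<in>I. f t \<in> pseudo_circle (a t) (r t)) \<and>
      (\<forall>t\<in>I. mink (vector_derivative f (at t)) (f t - a t) = 0)"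

end

theory Submission
  imports Defs
begin

lemma comp_deriv:
  fixes g :: "real \<Rightarrow> real \<times> real"
  assumes "(g has_vector_derivative v) (at t)"
  shows "((\<lambda>s. fst (g s)) has_real_derivative fst v) (at t)"
    and "((\<lambda>s. snd (g s)) has_real_derivative snd v) (at t)"
proof -
  have d: "(g has_derivative (\<lambda>x. x *\<^sub>R v)) (at t)"
    using assms by (simp add: has_vector_derivative_def)
  have "((\<lambda>s. fst (g s)) has_derivative (\<lambda>x. fst (x *\<^sub>R v))) (at t)"
    by (rule has_derivative_fst[OF d])
  then show "((\<lambda>s. fst (g s)) has_real_derivative fst v) (at t)"
    by (simp add: has_field_derivative_def mult_commute_abs)
  have "((\<lambda>s. snd (g s)) has_derivative (\<lambda>x. snd (x *\<^sub>R v))) (at t)"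
    by (rule has_derivative_snd[OF d])
  then show "((\<lambda>s. snd (g s)) has_real_derivative snd v) (at t)"
    by (simp add: has_field_derivative_def mult_commute_abs)
qed

lemma alg:
  fixes n1 n2 g1 g2 v1 v2 c :: real
  assumes "- n1 * n1 + n2 * n2 = 1" "- g1 * g1 + g2 * g2 = - (c^2)" "c > 0"
    and "- v1 * n1 + v2 * n2 = 0" "- v1 * g1 + v2 * g2 = 0"
  shows "v1 = 0 \<and> v2 = 0"
proof -
  have det: "n2 * g1 - n1 * g2 \<noteq> 0"
  proof
    assume h: "n2 * g1 - n1 * g2 = 0"
    have "(n2*g1)^2 = (n1*g2)^2" using h by (simp add: algebra_simps)
    hence "g1^2 * n2^2 = n1^2 * g2^2" by (metis power_mult_distrib mult.commute)
    moreover have "n2^2 = 1 + n1^2" "g2^2 = g1^2 - c^2" using assms(1,2) by (simp_all add: power2_eq_square)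
    ultimately have "g1^2 * (1 + n1^2) = n1^2 * (g1^2 - c^2)" by simp
    hence "g1^2 + n1^2 * c^2 = 0" by (simp add: algebra_simps)
    moreover have "g1^2 \<ge> 0" "n1^2 * c^2 \<ge> 0" by simp_all
    ultimately have "g1^2 = 0" "n1^2 * c^2 = 0" by linarith+
    hence "g1 = 0" "n1 = 0" using assms(3) by simp_all
    hence "g2 * g2 = - (c^2)" using assms(2) by simp
    moreover have "g2 * g2 \<ge> 0" by simp
    moreover have "c^2 > 0" using assms(3) by simp
    ultimately show False by linarith
  qed
  have "v1 * (n2 * g1 - n1 * g2) = 0"
  proof -
    have "v1 * (n2 * g1 - n1 * g2) = g2 * (- v1 * n1 + v2 * n2) - n2 * (- v1 * g1 + v2 * g2)"
      by (simp add: algebra_simps)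
    also have "\<dots> = 0" using assms(4,5) by (simp add: algebra_simps)
    finally show ?thesis .
  qed
  hence v1: "v1 = 0" using det by simp
  have "v2 * (n2 * g1 - n1 * g2) = 0"
  proof -
    have "v2 * (n2 * g1 - n1 * g2) = g1 * (- v1 * n1 + v2 * n2) - n1 * (- v1 * g1 + v2 * g2)"
      by (simp add: algebra_simps)
    also have "\<dots> = 0" using assms(4,5) by (simp add: algebra_simps)
    finally show ?thesis .
  qed
  hence "v2 = 0" using det by simp
  with v1 show ?thesis by simp
qed

theorem proposition2:
  fixes I :: "real set" and a \<nu> :: "real \<Rightarrow> real \<times> real" and r :: "real \<Rightarrow> real" and c :: real
  assumes "open I" and "is_interval I" and "I \<noteq> {}"
    and "timelike_frontal I a \<nu>"
    and "c > 0" and "\<forall>t\<in>I. r t = c"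
    and "\<not> (\<exists>p. \<forall>t\<in>I. a t = p)"
  shows "\<not> (\<exists>f. is_envelope I a r f)"
proof
  assume "\<exists>f. is_envelope I a r f"
  then obtain f where env: "is_envelope I a r f" by blast
  from assms(4) obtain Da where Da0: "Da 0 = a" and Da: "\<forall>k. \<forall>t\<in>I. (Da k has_vector_derivative Da (Suc k) t) (at t)"
    and nu: "\<forall>t\<in>I. \<nu> t \<in> deSitter1" and orth: "\<forall>t\<in>I. mink (vector_derivative a (at t)) (\<nu> t) = 0"
    unfolding timelike_frontal_def smooth_on_def by blast
  from env obtain Df where Df0: "Df 0 = f" and Df: "\<forall>k. \<forall>t\<in>I. (Df k has_vector_derivative Df (Suc k) t) (at t)"
    and circ: "\<forall>t\<in>I. f t \<in> pseudo_circle (a t) (r t)" and envc: "\<forall>t\<in>I. mink (vector_derivative f (at t)) (f t - a t) = 0"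
    unfolding is_envelope_def smooth_on_def by blast
  have zero: "(a has_vector_derivative 0) (at t within I)" if t: "t \<in> I" for t
  proof -
    have da: "(a has_vector_derivative Da 1 t) (at t)" using Da t Da0 by (metis One_nat_def)
    have df: "(f has_vector_derivative Df 1 t) (at t)" using Df t Df0 by (metis One_nat_def)
    define g where "g = (\<lambda>s. f s - a s)"
    define w where "w = Df 1 t - Da 1 t"
    have dg: "(g has_vector_derivative w) (at t)" unfolding g_def w_def
      by (rule has_vector_derivative_diff[OF df da])
    note c1 = comp_deriv(1)[OF dg] and c2 = comp_deriv(2)[OF dg]
    define h where "h = (\<lambda>s. - fst (g s) * fst (g s) + snd (g s) * snd (g s))"
    have dh: "(h has_real_derivative (- fst w * fst (g t) - fst (g t) * fst w + (snd w * snd (g t) + snd (g t) * snd w))) (at t)"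
      unfolding h_def
      using DERIV_add[OF DERIV_mult[OF DERIV_minus[OF c1] c1] DERIV_mult[OF c2 c2]]
      by (simp add: algebra_simps)
    have hc: "\<And>s. s \<in> I \<Longrightarrow> h s = - (c^2)"
      using circ assms(6) unfolding h_def g_def pseudo_circle_def mink_def by auto
    have "(h has_real_derivative 0) (at t)"
      by (rule has_field_derivative_transform_within_open[OF _ assms(1) t, of "\<lambda>_. - (c^2)"])
         (auto simp: hc)
    hence "- fst w * fst (g t) - fst (g t) * fst w + (snd w * snd (g t) + snd (g t) * snd w) = 0"
      using dh DERIV_unique by blast
    hence e1: "mink w (g t) = 0" unfolding mink_def by (simp add: algebra_simps)
    have "mink (vector_derivative f (at t)) (f t - a t) = 0" using envc t by blast
    hence e2: "mink (Df 1 t) (g t) = 0" using vector_derivative_at[OF df] g_def by simp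
    have e3: "mink (Da 1 t) (g t) = 0"
      using e1 e2 unfolding w_def mink_def by (simp add: algebra_simps)
    have "mink (vector_derivative a (at t)) (\<nu> t) = 0" using orth t by blast
    hence e4: "mink (Da 1 t) (\<nu> t) = 0" using vector_derivative_at[OF da] by simp
    have gg: "mink (g t) (g t) = - (c^2)" using circ assms(6) t unfolding g_def pseudo_circle_def by auto
    have nn: "mink (\<nu> t) (\<nu> t) = 1" using nu t unfolding deSitter1_def by auto
    have "fst (Da 1 t) = 0 \<and> snd (Da 1 t) = 0"
      by (rule alg[OF nn[unfolded mink_def] gg[unfolded mink_def] assms(5) e4[unfolded mink_def] e3[unfolded mink_def]])
    hence "Da 1 t = 0" by (simp add: prod_eq_iff)
    with da show ?thesis by (simp add: has_vector_derivative_at_within)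
  qed
  have "convex I" using assms(2) by (simp add: is_interval_convex_1)
  then obtain p where "\<And>x. x \<in> I \<Longrightarrow> a x = p"
    using has_vector_derivative_zero_constant zero by metis
  thus False using assms(7) by blast
qed

end
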